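(* Let $H_{\mathbb{C}}$ be the complex Heisenberg group of complex matrices $\begin{pmatrix}1&u_2&u_3\\0&1&u_1\\0&0&1\end{pmatrix}$. Let $\Lambda=\mathbb{Z}\langle1,e^{2\pi i/3}\rangle$ and $\Lambda'=\mathbb{Z}\langle1,i\rangle$ (Gaussian integers), and let $\Gamma_H$ (resp. $\Gamma_0$) be the subgroup of $H_{\mathbb{C}}$ of matrices with $u_1,u_2,u_3\in\Lambda$ (resp. $\in\Lambda'$). Let $N=\Gamma_H\backslash H_{\mathbb{C}}$ and let $N'=\Gamma_0\backslash H_{\mathbb{C}}$ be the Iwasawa manifold. Then $\pi_1(N)=\Gamma_H$ and $\pi_1(N')=\Gamma_0$ are not isomorphic groups; in particular $N$ and $N'$ are not diffeomorphic. *)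

theory Defs
  imports "HOL-Analysis.Analysis" "HOL-Algebra.Group" "HOL-Library.Numeral_Type"
begin

definition heis_mat :: "complex \<Rightarrow> complex \<Rightarrow> complex \<Rightarrow> complex^3^3" where
  "heis_mat u1 u2 u3 = (\<chi> i j. if i = j then 1
      else if i = 1 \<and> j = 2 then u2
      else if i = 1 \<and> j = 3 then u3
      else if i = 2 \<and> j = 3 then u1 else 0)"

definition heis_C :: "(complex^3^3) monoid" where
  "heis_C = \<lparr>carrier = {heis_mat u1 u2 u3 | u1 u2 u3. True},
            monoid.mult = (\<lambda>A B. A ** B), one = mat 1\<rparr>"

definition heis_lattice :: "complex set \<Rightarrow> (complex^3^3) monoid" where
  "heis_lattice L = \<lparr>carrier = {heis_mat u1 u2 u3 | u1 u2 u3. u1 \<in> L \<and> u2 \<in> L \<and> u3 \<in> L},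
            monoid.mult = (\<lambda>A B. A ** B), one = mat 1\<rparr>"

definition eisenstein_lattice :: "complex set" where
  "eisenstein_lattice = {of_int a + of_int b * exp (2 * of_real pi * \<i> / 3) | a b. True}"

definition gaussian_lattice :: "complex set" where
  "gaussian_lattice = {of_int a + of_int b * \<i> | a b. True}"

definition Gamma_H :: "(complex^3^3) monoid" where
  "Gamma_H = heis_lattice eisenstein_lattice"

definition Gamma_0 :: "(complex^3^3) monoid" where
  "Gamma_0 = heis_lattice gaussian_lattice"

end

theory Submission
  imports Defs
begin

lemma heis_mult:
  "heis_mat a1 a2 a3 ** heis_mat b1 b2 b3 = heis_mat (a1+b1) (a2+b2) (a3+b3+a2*b1)"
  unfolding heis_mat_def
  by (simp add: matrix_matrix_mult_def vec_eq_iff sum_3 forall_3 algebra_simps)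

lemma heis_inj:
  "heis_mat a1 a2 a3 = heis_mat b1 b2 b3 \<longleftrightarrow> a1 = b1 \<and> a2 = b2 \<and> a3 = b3"
proof
  assume h: "heis_mat a1 a2 a3 = heis_mat b1 b2 b3"
  have "heis_mat a1 a2 a3 $ 2 $ 3 = heis_mat b1 b2 b3 $ 2 $ 3"
       "heis_mat a1 a2 a3 $ 1 $ 2 = heis_mat b1 b2 b3 $ 1 $ 2"
       "heis_mat a1 a2 a3 $ 1 $ 3 = heis_mat b1 b2 b3 $ 1 $ 3" using h by auto
  then show "a1 = b1 \<and> a2 = b2 \<and> a3 = b3" unfolding heis_mat_def by simp
qed simp

lemma carrier_iff:
  "heis_mat u1 u2 u3 \<in> carrier (heis_lattice L) \<longleftrightarrow> u1 \<in> L \<and> u2 \<in> L \<and> u3 \<in> L"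
  unfolding heis_lattice_def by (auto simp: heis_inj)

lemma carrier_E:
  "X \<in> carrier (heis_lattice L) \<Longrightarrow> \<exists>u1 u2 u3. X = heis_mat u1 u2 u3 \<and> u1 \<in> L \<and> u2 \<in> L \<and> u3 \<in> L"
  unfolding heis_lattice_def by auto

lemma mult_lattice [simp]: "X \<otimes>\<^bsub>heis_lattice L\<^esub> Y = X ** Y"
  unfolding heis_lattice_def by simp

lemma comm_hom:
  assumes hom: "\<forall>x\<in>A. \<forall>y\<in>A. f (x ** y) = f x ** f y"
    and cl: "\<forall>x\<in>A. \<forall>y\<in>A. x ** y \<in> A"
    and "heis_mat a1 a2 a3 \<in> A" "heis_mat b1 b2 b3 \<in> A"
    and "heis_mat 0 0 (a2*b1 - a1*b2) \<in> A"
    and "f (heis_mat a1 a2 a3) = heis_mat p1 p2 p3"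
    and "f (heis_mat b1 b2 b3) = heis_mat q1 q2 q3"
    and "f (heis_mat 0 0 (a2*b1 - a1*b2)) = heis_mat r1 r2 r3"
  shows "r1 = 0 \<and> r2 = 0 \<and> r3 = p2*q1 - p1*q2"
proof -
  have e: "heis_mat a1 a2 a3 ** heis_mat b1 b2 b3 =
     heis_mat 0 0 (a2*b1 - a1*b2) ** (heis_mat b1 b2 b3 ** heis_mat a1 a2 a3)"
    by (simp add: heis_mult algebra_simps)
  have "f (heis_mat a1 a2 a3) ** f (heis_mat b1 b2 b3) =
     f (heis_mat 0 0 (a2*b1 - a1*b2)) ** (f (heis_mat b1 b2 b3) ** f (heis_mat a1 a2 a3))"
    using e hom cl assms(3-5) by metis
  then have "heis_mat (p1+q1) (p2+q2) (p3+q3+p2*q1) = heis_mat (r1+(q1+p1)) (r2+(q2+p2)) (r3+(q3+p3+q2*p1)+r2*(q1+p1))"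
    using assms(6-8) by (simp add: heis_mult)
  then show ?thesis by (auto simp: heis_inj algebra_simps)
qed

definition \<omega> :: complex where "\<omega> = exp (2 * of_real pi * \<i> / 3)"

lemma omega_eq: "\<omega>^2 + \<omega> + 1 = 0"
proof -
  have e: "of_nat 3 * (2 * of_real pi * \<i> / 3) = (2 * of_real pi * \<i> :: complex)" by simp
  have "\<omega>^3 = exp (of_nat 3 * (2 * of_real pi * \<i> / 3))"
    unfolding \<omega>_def by (rule exp_of_nat_mult[symmetric])
  also have "\<dots> = exp (2 * of_real pi * \<i>)" by (simp only: e)
  also have "\<dots> = 1" by (rule exp_two_pi_i)
  finally have c: "\<omega>^3 = 1" .
  have n: "\<omega> \<noteq> 1"
  proof
    assume "\<omega> = 1"
    then obtain n :: int where "2 * pi / 3 = 2 * pi * n"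
      unfolding \<omega>_def exp_eq_1 by (auto elim!: Ints_cases)
    then have "1 = 3 * real_of_int n" by (simp add: field_simps)
    then have "(1::int) = 3 * n" by linarith
    then show False by presburger
  qed
  have "(\<omega> - 1) * (\<omega>^2 + \<omega> + 1) = 0" using c by (simp add: algebra_simps power3_eq_cube power2_eq_square)
  then show ?thesis using n by simp
qed

lemma E_mem: "z \<in> eisenstein_lattice \<longleftrightarrow> (\<exists>a b. z = of_int a + of_int b * \<omega>)"
  unfolding eisenstein_lattice_def \<omega>_def by auto

lemma E_0: "0 \<in> eisenstein_lattice"
  unfolding E_mem by (rule exI[of _ 0], rule exI[of _ 0], simp)
lemma E_1: "1 \<in> eisenstein_lattice"
  unfolding E_mem by (rule exI[of _ 1], rule exI[of _ 0], simp)
lemma E_w: "\<omega> \<in> eisenstein_lattice"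
  unfolding E_mem by (rule exI[of _ 0], rule exI[of _ 1], simp)

lemma E_add: "x \<in> eisenstein_lattice \<Longrightarrow> y \<in> eisenstein_lattice \<Longrightarrow> x + y \<in> eisenstein_lattice"
  unfolding E_mem apply clarify
  subgoal for a c b d by (rule exI[of _ "a + c"], rule exI[of _ "b + d"], simp add: algebra_simps)
  done

lemma E_diff: "x \<in> eisenstein_lattice \<Longrightarrow> y \<in> eisenstein_lattice \<Longrightarrow> x - y \<in> eisenstein_lattice"
  unfolding E_mem apply clarify
  subgoal for a c b d by (rule exI[of _ "a - c"], rule exI[of _ "b - d"], simp add: algebra_simps)
  done

lemma E_mult: "x \<in> eisenstein_lattice \<Longrightarrow> y \<in> eisenstein_lattice \<Longrightarrow> x * y \<in> eisenstein_lattice"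
  unfolding E_mem apply clarify
  subgoal for a c b d
  proof (rule exI[of _ "a*c - b*d"], rule exI[of _ "a*d+b*c-b*d"])
    have w: "\<omega>*\<omega> = -1 - \<omega>" using omega_eq by (simp add: power2_eq_square algebra_simps eq_neg_iff_add_eq_0)
    have "(of_int a + of_int b * \<omega>) * (of_int c + of_int d * \<omega>) =
        of_int a * of_int c + (of_int a * of_int d + of_int b * of_int c) * \<omega> + of_int b * of_int d * (\<omega> * \<omega>)"
      by (simp add: algebra_simps)
    also have "\<dots> = of_int (a * c - b * d) + of_int (a * d + b * c - b * d) * \<omega>"
      unfolding w by (simp add: algebra_simps)
    finally show "(of_int a + of_int b * \<omega>) * (of_int c + of_int d * \<omega>) =
        of_int (a * c - b * d) + of_int (a * d + b * c - b * d) * \<omega>" .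
  qed
  done

lemma G_mem: "z \<in> gaussian_lattice \<longleftrightarrow> (\<exists>a b. z = of_int a + of_int b * \<i>)"
  unfolding gaussian_lattice_def by auto

lemma G_0: "0 \<in> gaussian_lattice"
  unfolding G_mem by (rule exI[of _ 0], rule exI[of _ 0], simp)
lemma G_1: "1 \<in> gaussian_lattice"
  unfolding G_mem by (rule exI[of _ 1], rule exI[of _ 0], simp)

lemma G_noroot: "p \<in> gaussian_lattice \<Longrightarrow> 1 + p + p*p \<noteq> 0"
proof
  assume "p \<in> gaussian_lattice" "1 + p + p*p = 0"
  then obtain a b :: int where p: "p = of_int a + of_int b * \<i>" and h: "1 + p + p*p = 0"
    unfolding G_mem by auto
  have "Re (1 + p + p*p) = 0" "Im (1 + p + p*p) = 0" using h by auto
  then have "real_of_int (1 + a + a*a - b*b) = 0" "real_of_int (b + 2*a*b) = 0" using p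
    by (simp_all add: algebra_simps)
  then have r: "1 + a + a*a - b*b = 0" and i: "b + 2*a*b = 0" by (simp_all only: of_int_eq_0_iff)
  have "b * (2*a+1) = 0" using i by (simp add: algebra_simps)
  moreover have "2*a+1 \<noteq> 0" by presburger
  ultimately have "b = 0" by simp
  with r have "a*a + a + 1 = 0" by simp
  moreover have "a*a + a + 1 > 0"
  proof (cases "a \<ge> 0")
    case True then show ?thesis by (simp add: add_pos_nonneg)
  next
    case False then have "1 \<le> -a" by simp
    then have "(-a)*1 \<le> (-a)*(-a)" by (intro mult_left_mono) auto
    then show ?thesis by simp
  qed
  ultimately show False by simp
qed

lemma H_closed: "\<forall>x\<in>carrier Gamma_H. \<forall>y\<in>carrier Gamma_H. x ** y \<in> carrier Gamma_H"
  unfolding Gamma_H_def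
  by (auto dest!: carrier_E simp: heis_mult carrier_iff E_add E_mult)

lemma H_mem: "heis_mat u1 u2 u3 \<in> carrier Gamma_H \<longleftrightarrow>
   u1 \<in> eisenstein_lattice \<and> u2 \<in> eisenstein_lattice \<and> u3 \<in> eisenstein_lattice"
  unfolding Gamma_H_def by (rule carrier_iff)

lemma O_mem: "heis_mat u1 u2 u3 \<in> carrier Gamma_0 \<longleftrightarrow>
   u1 \<in> gaussian_lattice \<and> u2 \<in> gaussian_lattice \<and> u3 \<in> gaussian_lattice"
  unfolding Gamma_0_def by (rule carrier_iff)

theorem proposition3p3:
  shows "\<not> (Gamma_H \<cong> Gamma_0)"
proof
  assume "Gamma_H \<cong> Gamma_0"
  then obtain \<phi> where "\<phi> \<in> iso Gamma_H Gamma_0" unfolding is_iso_def by auto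
  then have hom0: "\<forall>x\<in>carrier Gamma_H. \<forall>y\<in>carrier Gamma_H. \<phi> (x ** y) = \<phi> x ** \<phi> y"
    and bij: "bij_betw \<phi> (carrier Gamma_H) (carrier Gamma_0)"
    unfolding iso_def hom_def Gamma_H_def Gamma_0_def by auto
  note hom = hom0 H_closed
  define \<psi> where "\<psi> = inv_into (carrier Gamma_H) \<phi>"
  have psi_in: "\<psi> y \<in> carrier Gamma_H" if "y \<in> carrier Gamma_0" for y
    using bij that unfolding \<psi>_def
    by (metis bij_betw_def inv_into_into)
  have phi_psi: "\<phi> (\<psi> y) = y" if "y \<in> carrier Gamma_0" for y
    using bij that unfolding \<psi>_def by (meson bij_betw_inv_into_right)
  have phi_in: "\<phi> x \<in> carrier Gamma_0" if "x \<in> carrier Gamma_H" for x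
    using bij that by (meson bij_betwE)
  have inj: "inj_on \<phi> (carrier Gamma_H)" using bij by (simp add: bij_betw_def)
  have formH: "\<exists>u1 u2 u3. x = heis_mat u1 u2 u3 \<and> u1 \<in> eisenstein_lattice \<and> u2 \<in> eisenstein_lattice \<and> u3 \<in> eisenstein_lattice"
    if "x \<in> carrier Gamma_H" for x using that unfolding Gamma_H_def by (rule carrier_E)
  have form0: "\<exists>u1 u2 u3. y = heis_mat u1 u2 u3 \<and> u1 \<in> gaussian_lattice \<and> u2 \<in> gaussian_lattice \<and> u3 \<in> gaussian_lattice"
    if "y \<in> carrier Gamma_0" for y using that unfolding Gamma_0_def by (rule carrier_E)
  define X0 where "X0 = heis_mat 0 1 0"
  have X0: "X0 \<in> carrier Gamma_0" unfolding X0_def O_mem by (simp add: G_0 G_1)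
  obtain a1 a2 a3 where X: "\<psi> X0 = heis_mat a1 a2 a3" and a: "a1 \<in> eisenstein_lattice"
     "a2 \<in> eisenstein_lattice" "a3 \<in> eisenstein_lattice"
    using formH[OF psi_in[OF X0]] by blast
  have JX: "heis_mat (\<omega>*a1) (\<omega>*a2) 0 \<in> carrier Gamma_H"
    unfolding H_mem using a by (simp add: E_mult E_w E_0)
  obtain p1 p2 p3 where P: "\<phi> (heis_mat (\<omega>*a1) (\<omega>*a2) 0) = heis_mat p1 p2 p3"
    and p: "p1 \<in> gaussian_lattice" "p2 \<in> gaussian_lattice" "p3 \<in> gaussian_lattice"
    using form0[OF phi_in[OF JX]] by blast
  have claim: "\<exists>u\<in>eisenstein_lattice. \<phi> (heis_mat 0 0 u) = heis_mat 0 0 x \<and>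
      \<phi> (heis_mat 0 0 (\<omega>*u)) = heis_mat 0 0 (p2*x)" if x: "x \<in> gaussian_lattice" for x
  proof -
    define Y0 where "Y0 = heis_mat x 0 0"
    have Y0: "Y0 \<in> carrier Gamma_0" unfolding Y0_def O_mem by (simp add: G_0 x)
    obtain b1 b2 b3 where Y: "\<psi> Y0 = heis_mat b1 b2 b3" and b: "b1 \<in> eisenstein_lattice"
       "b2 \<in> eisenstein_lattice" "b3 \<in> eisenstein_lattice"
      using formH[OF psi_in[OF Y0]] by blast
    define u where "u = a2*b1 - a1*b2"
    have u: "u \<in> eisenstein_lattice" unfolding u_def using a b by (simp add: E_mult E_diff)
    have zu: "heis_mat 0 0 (a2*b1 - a1*b2) \<in> carrier Gamma_H"
      unfolding H_mem using u u_def by (simp add: E_0)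
    have wu: "(\<omega>*a2)*b1 - (\<omega>*a1)*b2 = \<omega>*u" unfolding u_def by (simp add: algebra_simps)
    have zwu: "heis_mat 0 0 ((\<omega>*a2)*b1 - (\<omega>*a1)*b2) \<in> carrier Gamma_H"
      unfolding H_mem wu using u by (simp add: E_0 E_mult E_w)
    obtain r1 r2 r3 where R: "\<phi> (heis_mat 0 0 (a2*b1 - a1*b2)) = heis_mat r1 r2 r3"
      using form0[OF phi_in[OF zu]] by blast
    obtain s1 s2 s3 where S: "\<phi> (heis_mat 0 0 ((\<omega>*a2)*b1 - (\<omega>*a1)*b2)) = heis_mat s1 s2 s3"
      using form0[OF phi_in[OF zwu]] by blast
    have PX: "\<phi> (heis_mat a1 a2 a3) = heis_mat 0 1 0" using phi_psi[OF X0] X X0_def by simp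
    have PY: "\<phi> (heis_mat b1 b2 b3) = heis_mat x 0 0" using phi_psi[OF Y0] Y Y0_def by simp
    have XH: "heis_mat a1 a2 a3 \<in> carrier Gamma_H" using psi_in[OF X0] X by simp
    have YH: "heis_mat b1 b2 b3 \<in> carrier Gamma_H" using psi_in[OF Y0] Y by simp
    have r: "r1 = 0 \<and> r2 = 0 \<and> r3 = 1*x - 0*0"
      by (rule comm_hom[OF hom XH YH zu PX PY R])
    have s: "s1 = 0 \<and> s2 = 0 \<and> s3 = p2*x - p1*0"
      by (rule comm_hom[OF hom JX YH zwu P PY S])
    show ?thesis
      using r s R S u unfolding u_def[symmetric] wu by auto
  qed
  obtain u where u: "u \<in> eisenstein_lattice" and u1: "\<phi> (heis_mat 0 0 u) = heis_mat 0 0 1"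
    and u2: "\<phi> (heis_mat 0 0 (\<omega>*u)) = heis_mat 0 0 p2"
    using claim[OF G_1] by auto
  obtain v where v: "v \<in> eisenstein_lattice" and v1: "\<phi> (heis_mat 0 0 v) = heis_mat 0 0 p2"
    and v2: "\<phi> (heis_mat 0 0 (\<omega> * v)) = heis_mat 0 0 (p2*p2)"
    using claim[OF p(2)] by auto
  have wuH: "heis_mat 0 0 (\<omega>*u) \<in> carrier Gamma_H" unfolding H_mem using u by (simp add: E_0 E_mult E_w)
  have vH: "heis_mat 0 0 v \<in> carrier Gamma_H" unfolding H_mem using v by (simp add: E_0)
  have "heis_mat 0 0 v = heis_mat 0 0 (\<omega>*u)"
    using inj_onD[OF inj _ vH wuH] v1 u2 by simp
  then have vu: "v = \<omega>*u" by (simp add: heis_inj)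
  have uH: "heis_mat 0 0 u \<in> carrier Gamma_H" unfolding H_mem using u by (simp add: E_0)
  have wwuH: "heis_mat 0 0 (\<omega> * v) \<in> carrier Gamma_H" unfolding H_mem using v by (simp add: E_0 E_mult E_w)
  have sum0: "u + \<omega>*u + \<omega> * v = 0" unfolding vu
  proof -
    have "u + \<omega>*u + \<omega>*(\<omega>*u) = (\<omega>^2 + \<omega> + 1) * u" by (simp add: algebra_simps power2_eq_square)
    then show "u + \<omega>*u + \<omega>*(\<omega>*u) = 0" by (simp add: omega_eq)
  qed
  have prod: "heis_mat 0 0 u ** heis_mat 0 0 (\<omega>*u) ** heis_mat 0 0 (\<omega> * v) = heis_mat 0 0 0"
    using sum0 by (simp add: heis_mult)
  have "\<phi> (heis_mat 0 0 u ** heis_mat 0 0 (\<omega>*u) ** heis_mat 0 0 (\<omega> * v))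
     = heis_mat 0 0 1 ** heis_mat 0 0 p2 ** heis_mat 0 0 (p2*p2)"
    using hom0 H_closed uH wuH wwuH u1 u2 v2 by metis
  then have e1: "\<phi> (heis_mat 0 0 0) = heis_mat 0 0 (1 + p2 + p2*p2)"
    unfolding prod by (simp add: heis_mult)
  have z0: "heis_mat 0 0 0 \<in> carrier Gamma_H" unfolding H_mem by (simp add: E_0)
  have "\<phi> (heis_mat 0 0 0) = \<phi> (heis_mat 0 0 0) ** \<phi> (heis_mat 0 0 0)"
    using hom0 z0 by (metis add_0 mult_zero_left heis_mult)
  then have "heis_mat 0 0 (1 + p2 + p2*p2) = heis_mat 0 0 (2 * (1 + p2 + p2*p2))"
    unfolding e1 by (simp add: heis_mult algebra_simps)
  then have "1 + p2 + p2*p2 = 0" by (simp add: heis_inj algebra_simps)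
  then show False using G_noroot[OF p(2)] by simp
qed

end
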